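(* Let $k\geq 3$ and $n\geq 2k+1$, and write $A=A_n$. The complex $\partial B_A$ contains, as facets, all of the following sets: 1. $[i,i+1]\cup H\cup\{n-i+1\}$, where $1\leq i\leq \lfloor n/2\rfloor-k+1$ and $H\in\mathcal F_{2k-4}^{[i+2,n-i]}$; 2. $[i,i+1]\cup H\cup\{n-i-1\}$, where $1\leq i\leq \lfloor n/2\rfloor-k+1$ and $H\in\mathcal F_{2k-4}^{[i+2,n-i-2]}$; 3. $\{i+1\}\cup H\cup[n-i,n-i+1]$, where $1\leq i\leq \lfloor n/2\rfloor-k+1$ and $H\in\mathcal F_{2k-4}^{[i+2,n-i-1]}$; 4. $\{i\}\cup H\cup[n-i-1,n-i]$, where $1\leq i\leq \lfloor n/2\rfloor-k+1$ and $H\in\mathcal F_{2k-4}^{[i+2,n-i-2]}$; 5. $\{1\}\cup H\cup[n-1,n]$, where $H\in\mathcal F_{2k-4}^{[2,n-2]}$; 6. $\{\lfloor n/2\rfloor-k+2\}\cup H$, where $H\in\mathcal F_{2k-2}^{[\lfloor n/2\rfloor-k+3,\ \lceil n/2\rceil+k]}$.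
   Context: For integers $m\leq n$, $[m,n]=\{m,m+1,\dots,n\}$. For $j\geq 1$, $\mathcal F_{2j}^{[m,n]}$ is the set of all $2j$-sets of the form $\{i_1,i_1+1,i_2,i_2+1,\dots,i_j,i_j+1\}$ with $m\leq i_1$, $i_j+1\leq n$, and $i_t\leq i_{t+1}-2$ for $1\leq t\leq j-1$. It is partially ordered by $\leq_p$: for $2j$-sets $X=\{x_1<\dots<x_{2j}\}$, $Y=\{y_1<\dots<y_{2j}\}$, $X\leq_p Y$ iff $x_t\leq y_t$ for all $t$. For an antichain $S$ of $\mathcal F_{2k}^{[1,n]}$, $B(S)$ is the pure simplicial complex whose facets are the elements of the order ideal of $(\mathcal F_{2k}^{[1,n]},\leq_p)$ generated by $S$. Let $S-\mathbf 1_{2k}=\{\{x_1-1,x_1,\dots,x_k-1,x_k\}:\{x_1,x_1+1,\dots,x_k,x_k+1\}\in S,\ x_1>1\}$, and let $B_S$ be the pure complex whose facets are the facets of $B(S)$ that are not facets of $B(S-\mathbf 1_{2k})$; $B_S$ is a PL $(2k-1)$-ball and $\partial B_S$ (the complex generated by the $(2k-2)$-faces of $B_S$ lying in exactly one facet of $B_S$) is a PL $(2k-2)$-sphere. Fix $k\geq3$ and define the antichain $A_n=\{F_1,\dots,F_{\lfloor n/2\rfloor-k+1}\}$ with $F_i=[i,i+1]\cup[n-2k+4-i,\,n-i+1]$. *)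

theory Defs
  imports Main
begin

text \<open>The family F_{2j}^{[m,n]}: sets {i_1,i_1+1,...,i_j,i_j+1} with m <= i_1,
  i_j + 1 <= n and i_t <= i_{t+1} - 2. Parameter j is half the cardinality.\<close>
definition Fam :: "nat \<Rightarrow> nat \<Rightarrow> nat \<Rightarrow> nat set set" where
  "Fam j m n = {X. \<exists>xs :: nat list. length xs = j \<and> 0 < j \<and>
      m \<le> hd xs \<and> last xs + 1 \<le> n \<and>
      (\<forall>t. Suc t < j \<longrightarrow> xs ! t + 2 \<le> xs ! Suc t) \<and>
      X = (\<Union>t<j. {xs ! t, xs ! t + 1})}"

definition leq_p :: "nat set \<Rightarrow> nat set \<Rightarrow> bool" where
  "leq_p X Y \<longleftrightarrow> card X = card Y \<and>
     (\<forall>t < card X. sorted_list_of_set X ! t \<le> sorted_list_of_set Y ! t)"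

text \<open>Facets of B(S): the order ideal of (F_{2k}^{[1,n]}, leq_p) generated by S.\<close>
definition B_facets :: "nat \<Rightarrow> nat \<Rightarrow> nat set set \<Rightarrow> nat set set" where
  "B_facets k n S = {X \<in> Fam k 1 n. \<exists>Y \<in> S. leq_p X Y}"

definition shift_down :: "nat set set \<Rightarrow> nat set set" where
  "shift_down S = {(\<lambda>x. x - 1) ` X | X. X \<in> S \<and> Min X > 1}"

definition BS_facets :: "nat \<Rightarrow> nat \<Rightarrow> nat set set \<Rightarrow> nat set set" where
  "BS_facets k n S = B_facets k n S - B_facets k n (shift_down S)"

definition bdry_facets :: "nat set set \<Rightarrow> nat set set" where
  "bdry_facets Fs = {G. (\<exists>F\<in>Fs. G \<subseteq> F \<and> card G + 1 = card F) \<and>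
                        card {F \<in> Fs. G \<subseteq> F} = 1}"

definition A_anti :: "nat \<Rightarrow> nat \<Rightarrow> nat set set" where
  "A_anti k n = {{i, i+1} \<union> {n + 4 - 2*k - i .. n - i + 1} | i. 1 \<le> i \<and> i \<le> n div 2 - k + 1}"

end

theory Submission
  imports Defs
begin

definition rk :: "nat set \<Rightarrow> nat \<Rightarrow> nat" where "rk X y = card {z\<in>X. z < y}"
definition cle :: "nat set \<Rightarrow> nat \<Rightarrow> nat" where "cle X v = card {z\<in>X. z \<le> v}"
definition paired :: "nat set \<Rightarrow> bool" where
  "paired X \<longleftrightarrow> (\<forall>y\<in>X. even (rk X y) \<longrightarrow> Suc y \<in> X)"

lemma rank_nth:
  assumes "finite X" "q < card X"
  shows "card {z\<in>X. z < sorted_list_of_set X ! q} = q"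
proof -
  let ?s = "sorted_list_of_set X"
  have ss: "sorted_wrt (<) ?s" by (rule strict_sorted_list_of_set)
  have len: "length ?s = card X" by simp
  have set: "set ?s = X" using assms by simp
  have "{z\<in>X. z < ?s ! q} = set (take q ?s)"
  proof (rule set_eqI, rule iffI)
    fix z assume "z \<in> {z\<in>X. z < ?s ! q}"
    then have zs: "z \<in> set ?s" "z < ?s ! q" using set by auto
    from zs(1) obtain p where p0: "p < length ?s" "?s ! p = z" unfolding in_set_conv_nth by blast
    have p: "p < length ?s" "?s ! p = z" "z < ?s ! q" using p0 zs by auto
    have "p < q"
    proof (rule ccontr)
      assume "\<not> p < q"
      then have "q \<le> p" by simp
      then have "?s ! q \<le> ?s ! p"
      proof (cases "q = p")
        case False
        then have "q < p" using \<open>q \<le> p\<close> by simp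
        then show ?thesis using sorted_wrt_nth_less[OF ss _ p(1)] by (simp add: less_imp_le)
      qed simp
      then show False using p by simp
    qed
    then show "z \<in> set (take q ?s)" using p by (auto simp: in_set_conv_nth intro!: exI[of _ p])
  next
    fix z assume "z \<in> set (take q ?s)"
    then obtain p where p: "p < q" "?s ! p = z" using assms len
      by (auto simp: in_set_conv_nth)
    have "?s ! p < ?s ! q" using sorted_wrt_nth_less[OF ss p(1)] assms len by simp
    moreover have "z \<in> X" proof -
      have "p < length ?s" using p assms len by simp
      then show ?thesis using p set nth_mem by blast
    qed
    ultimately show "z \<in> {z\<in>X. z < ?s ! q}" using p by simp
  qed
  moreover have "card (set (take q ?s)) = q"
    using assms len by (simp add: distinct_card)
  ultimately show ?thesis by simp
qed

lemma L1:
  assumes "finite X" "t < card X"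
  shows "(sorted_list_of_set X ! t \<le> v) = (t < card {z\<in>X. z \<le> v})"
proof -
  let ?a = "sorted_list_of_set X ! t"
  have aX: "?a \<in> X" using assms nth_mem[of t "sorted_list_of_set X"] by simp
  have r: "card {z\<in>X. z < ?a} = t" by (rule rank_nth[OF assms])
  show ?thesis
  proof
    assume "?a \<le> v"
    have sub: "insert ?a {z\<in>X. z < ?a} \<subseteq> {z\<in>X. z \<le> v}" using aX \<open>?a \<le> v\<close> by auto
    moreover have "card (insert ?a {z\<in>X. z < ?a}) = Suc t" using r assms by simp
    ultimately show "t < card {z\<in>X. z \<le> v}"
    proof -
      have "card (insert ?a {z\<in>X. z < ?a}) \<le> card {z\<in>X. z \<le> v}"
        using sub assms(1) by (intro card_mono) auto
      then show ?thesis using \<open>card (insert ?a {z\<in>X. z < ?a}) = Suc t\<close> by simp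
    qed
  next
    assume h: "t < card {z\<in>X. z \<le> v}"
    show "?a \<le> v"
    proof (rule ccontr)
      assume "\<not> ?a \<le> v"
      then have "{z\<in>X. z \<le> v} \<subseteq> {z\<in>X. z < ?a}" by auto
      then have "card {z\<in>X. z \<le> v} \<le> t" using r assms(1) card_mono[of "{z\<in>X. z < ?a}" "{z\<in>X. z \<le> v}"] by simp
      then show False using h by simp
    qed
  qed
qed

lemma LQ:
  assumes "finite X" "finite Y" "card X = card Y" "\<And>v. cle Y v \<le> cle X v"
  shows "leq_p X Y"
  unfolding leq_p_def
proof (intro conjI allI impI)
  show "card X = card Y" by fact
  fix t assume t: "t < card X"
  let ?v = "sorted_list_of_set Y ! t"
  have "t < cle Y ?v" using L1[OF assms(2), of t ?v] t assms(3) by (simp add: cle_def)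
  then have "t < cle X ?v" using assms(4)[of ?v] by simp
  then show "sorted_list_of_set X ! t \<le> ?v" using L1[OF assms(1) t] by (simp add: cle_def)
qed

lemma LP:
  assumes "finite X" "finite Y" "leq_p X Y"
  shows "cle Y v \<le> cle X v"
proof (cases "cle Y v = 0")
  case True then show ?thesis by simp
next
  case False
  define t where "t = cle Y v - 1"
  have cY: "card X = card Y" using assms(3) by (simp add: leq_p_def)
  have "cle Y v \<le> card Y" unfolding cle_def using assms(2) by (intro card_mono) auto
  then have tY: "t < card Y" using False t_def by simp
  have "sorted_list_of_set Y ! t \<le> v" using L1[OF assms(2) tY, of v] False t_def unfolding cle_def by linarith
  moreover have "sorted_list_of_set X ! t \<le> sorted_list_of_set Y ! t"
    using assms(3) tY cY by (simp add: leq_p_def)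
  ultimately have "sorted_list_of_set X ! t \<le> v" by simp
  then have "t < cle X v" using L1[OF assms(1), of t v] tY cY by (simp add: cle_def)
  then show ?thesis using t_def False by simp
qed


lemma spaced_mono:
  fixes a :: "nat \<Rightarrow> nat"
  assumes "\<And>u. Suc u < j \<Longrightarrow> a u + 2 \<le> a (Suc u)" "u < t" "t < j"
  shows "a u + 2 \<le> a t"
  using assms(2,3)
proof (induction t)
  case 0 then show ?case by simp
next
  case (Suc t)
  show ?case
  proof (cases "u = t")
    case True then show ?thesis using assms(1) Suc by simp
  next
    case False
    then have "a u + 2 \<le> a t" using Suc by simp
    moreover have "a t + 2 \<le> a (Suc t)" using assms(1) Suc by simp
    ultimately show ?thesis by simp
  qed
qed

lemma spaced_card:
  fixes a :: "nat \<Rightarrow> nat"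
  assumes "\<And>u. Suc u < j \<Longrightarrow> a u + 2 \<le> a (Suc u)" "t \<le> j"
  shows "card (\<Union>u<t. {a u, a u + 1}) = 2 * t"
  using assms(2)
proof (induction t)
  case 0 then show ?case by simp
next
  case (Suc t)
  have eq: "(\<Union>u<Suc t. {a u, a u + 1}) = {a t, a t + 1} \<union> (\<Union>u<t. {a u, a u + 1})"
    by (auto simp: lessThan_Suc)
  have disj: "{a t, a t + 1} \<inter> (\<Union>u<t. {a u, a u + 1}) = {}"
  proof -
    have "\<And>u. u < t \<Longrightarrow> a u + 2 \<le> a t" using spaced_mono[where a=a and j=j, OF assms(1)] Suc by simp
    then show ?thesis by fastforce
  qed
  have "card (\<Union>u<Suc t. {a u, a u + 1}) = card {a t, a t + 1} + card (\<Union>u<t. {a u, a u + 1})"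
    unfolding eq by (rule card_Un_disjoint) (use disj in auto)
  then show ?case using Suc by simp
qed

lemma famD:
  assumes "X \<in> Fam j m n"
  shows "finite X \<and> card X = 2 * j \<and> X \<subseteq> {m..n} \<and> paired X \<and> 0 < j"
proof -
  obtain xs where xs: "length xs = j" "0 < j" "m \<le> hd xs" "last xs + 1 \<le> n"
    "\<forall>t. Suc t < j \<longrightarrow> xs ! t + 2 \<le> xs ! Suc t" "X = (\<Union>t<j. {xs ! t, xs ! t + 1})"
    using assms unfolding Fam_def by blast
  define a where "a = (\<lambda>t. xs ! t)"
  have sp: "\<And>u. Suc u < j \<Longrightarrow> a u + 2 \<le> a (Suc u)" using xs(5) a_def by simp
  have X: "X = (\<Union>t<j. {a t, a t + 1})" using xs(6) a_def by simp
  have mon: "\<And>u t. u < t \<Longrightarrow> t < j \<Longrightarrow> a u + 2 \<le> a t" using spaced_mono[where a=a and j=j, OF sp] by blast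
  have fin: "finite X" using X by simp
  have card: "card X = 2 * j" using X spaced_card[where a=a and j=j, OF sp, of j] by simp
  have a0: "a 0 = hd xs" using xs(1,2) a_def by (cases xs) auto
  have ne: "xs \<noteq> []" using xs(1,2) by auto
  have al: "a (j - 1) = last xs" using xs(1) ne a_def by (simp add: last_conv_nth)
  have lo: "\<And>t. t < j \<Longrightarrow> m \<le> a t"
  proof -
    fix t assume "t < j"
    then have "a 0 \<le> a t" using mon[of 0 t] by (cases t) auto
    then show "m \<le> a t" using a0 xs(3) by simp
  qed
  have hi: "\<And>t. t < j \<Longrightarrow> a t + 1 \<le> n"
  proof -
    fix t assume "t < j"
    then have "a t \<le> a (j - 1)"
    proof (cases "t = j - 1")
      case False
      then have "t < j - 1" using \<open>t < j\<close> by simp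
      then show ?thesis using mon[of t "j - 1"] xs(2) by simp
    qed simp
    then show "a t + 1 \<le> n" using al xs(4) by simp
  qed
  have sub: "X \<subseteq> {m..n}" using X lo hi by fastforce
  have below: "\<And>t. t < j \<Longrightarrow> {z\<in>X. z < a t} = (\<Union>u<t. {a u, a u + 1})"
  proof -
    fix t assume t: "t < j"
    show "{z\<in>X. z < a t} = (\<Union>u<t. {a u, a u + 1})"
    proof (rule set_eqI, rule iffI)
      fix z assume "z \<in> {z\<in>X. z < a t}"
      then obtain u where u: "u < j" "z = a u \<or> z = a u + 1" "z < a t" using X by auto
      have "u < t"
      proof (rule ccontr)
        assume "\<not> u < t"
        then have "a t \<le> a u" using mon[of t u] u(1) by (cases "t = u") auto
        then show False using u by auto
      qed
      then show "z \<in> (\<Union>u<t. {a u, a u + 1})" using u by auto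
    next
      fix z assume "z \<in> (\<Union>u<t. {a u, a u + 1})"
      then obtain u where u: "u < t" "z = a u \<or> z = a u + 1" by auto
      then have "a u + 2 \<le> a t" using mon t by simp
      then show "z \<in> {z\<in>X. z < a t}" using u t X by auto
    qed
  qed
  have pr: "paired X"
    unfolding paired_def
  proof (intro ballI impI)
    fix y assume yX: "y \<in> X" and ev: "even (rk X y)"
    then obtain t where t: "t < j" "y = a t \<or> y = a t + 1" using X by auto
    have cb: "card (\<Union>u<t. {a u, a u + 1}) = 2 * t" using spaced_card[where a=a and j=j, OF sp, of t] t by simp
    show "Suc y \<in> X"
    proof (cases "y = a t")
      case True
      then show ?thesis using X t by auto
    next
      case False
      then have y: "y = a t + 1" using t by simp
      have "{z\<in>X. z < y} = insert (a t) {z\<in>X. z < a t}" using y X t by auto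
      moreover have "a t \<notin> {z\<in>X. z < a t}" by simp
      ultimately have "rk X y = Suc (2 * t)" using below[OF t(1)] cb fin unfolding rk_def by simp
      then show ?thesis using ev by simp
    qed
  qed
  show ?thesis using fin card sub pr xs(2) by blast
qed


lemma famI:
  assumes "finite X" "card X = 2 * j" "0 < j" "X \<subseteq> {m..n}" "paired X"
  shows "X \<in> Fam j m n"
proof -
  let ?s = "sorted_list_of_set X"
  have len: "length ?s = 2 * j" using assms by simp
  have set: "set ?s = X" using assms by simp
  have ss: "sorted_wrt (<) ?s" by (rule strict_sorted_list_of_set)
  have so: "sorted ?s" by simp
  have inX: "\<And>q. q < 2 * j \<Longrightarrow> ?s ! q \<in> X"
  proof -
    fix q assume "q < 2 * j"
    then have "?s ! q \<in> set ?s" using len by simp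
    then show "?s ! q \<in> X" using set by simp
  qed
  have key: "\<And>t. t < j \<Longrightarrow> ?s ! (2*t+1) = ?s ! (2*t) + 1"
  proof -
    fix t assume t: "t < j"
    have "rk X (?s ! (2*t)) = 2 * t" unfolding rk_def using rank_nth[OF assms(1), of "2*t"] assms(2) t by simp
    then have ev: "even (rk X (?s ! (2*t)))" by simp
    have "?s ! (2*t) \<in> X" using inX[of "2*t"] t by simp
    then have "Suc (?s ! (2*t)) \<in> X" using assms(5) ev unfolding paired_def by blast
    then have "Suc (?s ! (2*t)) \<in> set ?s" using set by simp
    then obtain p where p0: "p < length ?s" "?s ! p = Suc (?s ! (2*t))" unfolding in_set_conv_nth by blast
    then have p: "p < 2 * j" "?s ! p = Suc (?s ! (2*t))" using len by auto
    have "2 * t < p"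
    proof (rule ccontr)
      assume "\<not> 2 * t < p"
      then have "?s ! p \<le> ?s ! (2*t)" using sorted_nth_mono[OF so, of p "2*t"] len t by simp
      then show False using p by simp
    qed
    then have "?s ! (2*t+1) \<le> ?s ! p" using sorted_nth_mono[OF so, of "2*t+1" p] len p by simp
    moreover have "?s ! (2*t) < ?s ! (2*t+1)" using sorted_wrt_nth_less[OF ss, of "2*t" "2*t+1"] len t by simp
    ultimately show "?s ! (2*t+1) = ?s ! (2*t) + 1" using p by simp
  qed
  define xs where "xs = map (\<lambda>t. ?s ! (2*t)) [0..<j]"
  have l: "length xs = j" by (simp add: xs_def)
  have nth: "\<And>t. t < j \<Longrightarrow> xs ! t = ?s ! (2*t)" by (simp add: xs_def)
  have xne: "xs \<noteq> []" using l assms(3) by auto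
  have "hd xs = ?s ! 0" using assms(3) xne nth[of 0] by (simp add: hd_conv_nth)
  then have h: "m \<le> hd xs" using inX[of 0] assms(3,4) by auto
  have "last xs = ?s ! (2*(j-1))" using assms(3) l xne nth[of "j-1"] by (simp add: last_conv_nth)
  then have "last xs + 1 = ?s ! (2*(j-1)+1)" using key[of "j-1"] assms(3) by simp
  moreover have "2*(j-1)+1 < 2 * j" using assms(3) by simp
  ultimately have la: "last xs + 1 \<le> n" using inX[of "2*(j-1)+1"] assms(4) by auto
  have spc: "\<forall>t. Suc t < j \<longrightarrow> xs ! t + 2 \<le> xs ! Suc t"
  proof (intro allI impI)
    fix t assume t: "Suc t < j"
    have "?s ! (2*t+1) < ?s ! (2*t+2)" using sorted_wrt_nth_less[OF ss, of "2*t+1" "2*t+2"] len t by simp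
    then show "xs ! t + 2 \<le> xs ! Suc t" using key[of t] nth[of t] nth[of "Suc t"] t by simp
  qed
  have XU: "X = (\<Union>t<j. {xs ! t, xs ! t + 1})"
  proof (rule set_eqI, rule iffI)
    fix z assume "z \<in> X"
    then have "z \<in> set ?s" using set by simp
    then obtain q where q0: "q < length ?s" "?s ! q = z" unfolding in_set_conv_nth by blast
    then have q: "q < 2 * j" "?s ! q = z" using len by auto
    define t where "t = q div 2"
    have t: "t < j" using q t_def by simp
    have "q = 2*t \<or> q = 2*t+1" using t_def by presburger
    then have "z = xs ! t \<or> z = xs ! t + 1" using q key[OF t] nth[OF t] by auto
    then show "z \<in> (\<Union>t<j. {xs ! t, xs ! t + 1})" using t by auto
  next
    fix z assume "z \<in> (\<Union>t<j. {xs ! t, xs ! t + 1})"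
    then obtain t where t: "t < j" "z = xs ! t \<or> z = xs ! t + 1" by auto
    then have "z = ?s ! (2*t) \<or> z = ?s ! (2*t+1)" using key[OF t(1)] nth[OF t(1)] by auto
    then show "z \<in> X" using inX t(1) by auto
  qed
  show ?thesis unfolding Fam_def using l assms(3) h la spc XU by blast
qed


lemma paired_pred:
  assumes "finite X" "paired X" "y \<in> X" "odd (rk X y)"
  shows "1 \<le> y \<and> y - 1 \<in> X"
proof -
  let ?B = "{z\<in>X. z < y}"
  have fB: "finite ?B" using assms(1) by simp
  have "?B \<noteq> {}" using assms(4) unfolding rk_def by (metis card.empty odd_pos less_irrefl)
  define w where "w = Max ?B"
  have wB: "w \<in> ?B" using fB \<open>?B \<noteq> {}\<close> w_def Max_in by blast
  have wmax: "\<And>z. z \<in> ?B \<Longrightarrow> z \<le> w" using fB w_def by simp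
  have "{z\<in>X. z < w} = ?B - {w}" using wB wmax by fastforce
  then have "rk X w = rk X y - 1" unfolding rk_def using wB fB by simp
  then have "even (rk X w)" using assms(4) by (auto elim: oddE)
  then have "Suc w \<in> X" using assms(2) wB unfolding paired_def by simp
  moreover have "Suc w \<le> y" using wB by simp
  ultimately have "Suc w = y" using wmax[of "Suc w"] by (cases "Suc w = y") auto
  then show ?thesis using wB by auto
qed

lemma paired_even_card:
  assumes "finite X" "paired X"
  shows "even (card X)"
proof (rule ccontr)
  assume od: "odd (card X)"
  then have ne: "X \<noteq> {}" by auto
  define M where "M = Max X"
  have MX: "M \<in> X" using assms(1) ne M_def by simp
  have "{z\<in>X. z < M} = X - {M}"
  proof (rule set_eqI)
    fix z
    show "z \<in> {z\<in>X. z < M} \<longleftrightarrow> z \<in> X - {M}"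
      using Max_ge[OF assms(1), of z] M_def by (cases "z \<in> X") auto
  qed
  then have "rk X M = card X - 1" unfolding rk_def using MX assms(1) by simp
  then have "even (rk X M)" using od by (auto elim: oddE)
  then have "Suc M \<in> X" using assms(2) MX unfolding paired_def by simp
  then show False using assms(1) M_def by (metis Max_ge Suc_n_not_le_n)
qed

lemma paired_union:
  assumes "finite P" "finite Q" "paired P" "paired Q" "\<And>p q. p \<in> P \<Longrightarrow> q \<in> Q \<Longrightarrow> p < q"
  shows "paired (P \<union> Q)"
  unfolding paired_def
proof (intro ballI impI)
  fix y assume y: "y \<in> P \<union> Q" and ev: "even (rk (P \<union> Q) y)"
  show "Suc y \<in> P \<union> Q"
  proof (cases "y \<in> P")
    case True
    have "{z\<in>P \<union> Q. z < y} = {z\<in>P. z < y}" using True assms(5) by fastforce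
    then have "rk (P \<union> Q) y = rk P y" by (simp add: rk_def)
    then show ?thesis using ev True assms(3) unfolding paired_def by simp
  next
    case False
    then have yQ: "y \<in> Q" using y by simp
    have "{z\<in>P \<union> Q. z < y} = P \<union> {z\<in>Q. z < y}" using yQ assms(5) by fastforce
    moreover have "P \<inter> {z\<in>Q. z < y} = {}" using assms(5) by fastforce
    ultimately have "rk (P \<union> Q) y = card P + rk Q y" unfolding rk_def using assms(1,2)
      by (simp add: card_Un_disjoint)
    moreover have "even (card P)" using paired_even_card assms(1,3) by simp
    ultimately have "even (rk Q y)" using ev by simp
    then show ?thesis using yQ assms(4) unfolding paired_def by simp
  qed
qed

lemma paired_pair: "paired {a, Suc a}"
  unfolding paired_def
proof (intro ballI impI)
  fix y assume y: "y \<in> {a, Suc a}" and ev: "even (rk {a, Suc a} y)"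
  show "Suc y \<in> {a, Suc a}"
  proof (cases "y = a")
    case True then show ?thesis by simp
  next
    case False
    then have "y = Suc a" using y by simp
    moreover have "{z \<in> {a, Suc a}. z < Suc a} = {a}" by auto
    ultimately have "rk {a, Suc a} y = 1" unfolding rk_def by simp
    then show ?thesis using ev by simp
  qed
qed




lemma run_before:
  assumes finP: "finite P" and pP: "paired P" and PL: "\<And>p. p \<in> P \<Longrightarrow> p < L"
    and G: "G = insert L P" and ex: "\<exists>y<L. y \<notin> G"
    and x0: "x0 = Max {y. y < L \<and> y \<notin> G}"
  shows "x0 < L" "x0 \<notin> G" "\<And>z. x0 < z \<Longrightarrow> z \<le> L \<Longrightarrow> z \<in> G"
    "paired (insert x0 G)"
    "\<And>x. x \<notin> G \<Longrightarrow> x < L \<Longrightarrow> paired (insert x G) \<Longrightarrow> x = x0"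
proof -
  let ?S = "{y. y < L \<and> y \<notin> G}"
  have fS: "finite ?S" by (rule finite_subset[of _ "{..<L}"]) auto
  have nS: "?S \<noteq> {}" using ex by auto
  have x0S: "x0 \<in> ?S" using x0 fS nS Max_in by blast
  have x0max: "\<And>y. y \<in> ?S \<Longrightarrow> y \<le> x0" using x0 fS by simp
  show a: "x0 < L" using x0S by simp
  show b: "x0 \<notin> G" using x0S by simp
  show run: "\<And>z. x0 < z \<Longrightarrow> z \<le> L \<Longrightarrow> z \<in> G"
  proof -
    fix z assume z: "x0 < z" "z \<le> L"
    show "z \<in> G"
    proof (cases "z = L")
      case True then show ?thesis using G by simp
    next
      case False
      then have "z < L" using z by simp
      show ?thesis
      proof (rule ccontr)
        assume "z \<notin> G"
        then have "z \<le> x0" using x0max \<open>z < L\<close> by simp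
        then show False using z by simp
      qed
    qed
  qed
  have x0P: "x0 \<notin> P" using b G by simp
  have finG: "finite G" using G finP by simp
  have rkev: "even (card {z\<in>P. z < x0})"
  proof (cases "Suc x0 = L")
    case True
    have "{z\<in>P. z < x0} = P"
    proof (rule set_eqI)
      fix z show "z \<in> {z\<in>P. z < x0} \<longleftrightarrow> z \<in> P"
        using PL[of z] True x0P by (cases "z = x0") auto
    qed
    then show ?thesis using paired_even_card[OF finP pP] by simp
  next
    case False
    then have "Suc x0 < L" using a by simp
    then have sP: "Suc x0 \<in> P" using run[of "Suc x0"] G by auto
    have eq: "{z\<in>P. z < Suc x0} = {z\<in>P. z < x0}" using x0P by (auto simp: less_Suc_eq)
    show ?thesis
    proof (rule ccontr)
      assume "odd (card {z\<in>P. z < x0})"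
      then have "odd (rk P (Suc x0))" unfolding rk_def using eq by simp
      then have "Suc x0 - 1 \<in> P" using paired_pred[OF finP pP sP] by simp
      then show False using x0P by simp
    qed
  qed
  show "paired (insert x0 G)"
    unfolding paired_def
  proof (intro ballI impI)
    fix y assume y: "y \<in> insert x0 G" and ev: "even (rk (insert x0 G) y)"
    have yL: "y \<le> L" using y G PL a by (auto intro: less_imp_le)
    show "Suc y \<in> insert x0 G"
    proof (cases "y < x0")
      case True
      then have yP: "y \<in> P" using y G a by auto
      have "{z\<in>insert x0 G. z < y} = {z\<in>P. z < y}" using True G a by auto
      then have "even (rk P y)" using ev unfolding rk_def by simp
      then show ?thesis using pP yP G unfolding paired_def by blast
    next
      case False
      show ?thesis
      proof (cases "y = L")
        case True
        have "{z\<in>insert x0 G. z < L} = insert x0 P" using G a PL by auto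
        then have "rk (insert x0 G) y = Suc (card P)" unfolding rk_def using True finP x0P by simp
        moreover have "even (card P)" using paired_even_card[OF finP pP] .
        ultimately show ?thesis using ev by simp
      next
        case False
        then have "y < L" using yL by simp
        then show ?thesis using run[of "Suc y"] \<open>\<not> y < x0\<close> by simp
      qed
    qed
  qed
  show "\<And>x. x \<notin> G \<Longrightarrow> x < L \<Longrightarrow> paired (insert x G) \<Longrightarrow> x = x0"
  proof -
    fix x assume xG: "x \<notin> G" and xL: "x < L" and pX: "paired (insert x G)"
    show "x = x0"
    proof (rule ccontr)
      assume ne: "x \<noteq> x0"
      have "x < x0"
      proof (rule ccontr)
        assume "\<not> x < x0"
        then have "x0 < x" using ne by simp
        then show False using run[of x] xL xG by simp
      qed
      have s: "Suc x0 \<in> insert x G" using run[of "Suc x0"] a by simp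
      have "{z\<in>insert x G. z < Suc x0} = insert x {z\<in>P. z < x0}"
        using \<open>x < x0\<close> G a PL x0P by (auto simp: less_Suc_eq)
      moreover have "x \<notin> {z\<in>P. z < x0}" using xG G by simp
      ultimately have "rk (insert x G) (Suc x0) = Suc (card {z\<in>P. z < x0})"
        unfolding rk_def using finP by simp
      then have "odd (rk (insert x G) (Suc x0))" using rkev by simp
      then have "Suc x0 - 1 \<in> insert x G" using paired_pred[OF _ pX s] finG by simp
      then show False using ne b by simp
    qed
  qed
qed

lemma run_after:
  assumes finP: "finite P" and pP: "paired P" and PS: "\<And>p. p \<in> P \<Longrightarrow> S < p"
    and G: "G = insert S P" and ex: "\<exists>y>S. y \<notin> G"
    and x0: "x0 = (LEAST y. S < y \<and> y \<notin> G)"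
  shows "S < x0" "x0 \<notin> G" "\<And>z. S \<le> z \<Longrightarrow> z < x0 \<Longrightarrow> z \<in> G"
    "paired (insert x0 G)"
    "\<And>x. x \<notin> G \<Longrightarrow> S < x \<Longrightarrow> paired (insert x G) \<Longrightarrow> x = x0"
proof -
  have x0S: "S < x0 \<and> x0 \<notin> G" unfolding x0 by (rule LeastI_ex) (rule ex)
  have x0min: "\<And>y. S < y \<Longrightarrow> y \<notin> G \<Longrightarrow> x0 \<le> y"
  proof -
    fix y assume "S < y" "y \<notin> G"
    then show "x0 \<le> y" unfolding x0 by (intro Least_le) simp
  qed
  show a: "S < x0" using x0S by simp
  show b: "x0 \<notin> G" using x0S by simp
  show run: "\<And>z. S \<le> z \<Longrightarrow> z < x0 \<Longrightarrow> z \<in> G"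
  proof -
    fix z assume z: "S \<le> z" "z < x0"
    show "z \<in> G"
    proof (cases "z = S")
      case True then show ?thesis using G by simp
    next
      case False
      then have "S < z" using z by simp
      show ?thesis
      proof (rule ccontr)
        assume "z \<notin> G"
        then have "x0 \<le> z" using x0min \<open>S < z\<close> by simp
        then show False using z by simp
      qed
    qed
  qed
  have x0P: "x0 \<notin> P" using b G by simp
  have SP: "S \<notin> P" using PS by blast
  have finG: "finite G" using G finP by simp
  have rkev: "even (rk P x0)"
  proof (cases "x0 = Suc S")
    case True
    have e0: "{z\<in>P. z < x0} = {}" using PS True by fastforce
    show ?thesis unfolding rk_def e0 by simp
  next
    case False
    then have "Suc S < x0" using a by simp
    then have "x0 - 1 \<in> G" using run[of "x0 - 1"] by simp
    then have pm: "x0 - 1 \<in> P" using G \<open>Suc S < x0\<close> by auto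
    have eq: "{z\<in>P. z < x0} = insert (x0 - 1) {z\<in>P. z < x0 - 1}" using pm a by auto
    show ?thesis
    proof (rule ccontr)
      assume "odd (rk P x0)"
      then have "even (rk P (x0 - 1))" unfolding rk_def using eq finP by simp
      then have "Suc (x0 - 1) \<in> P" using pP pm unfolding paired_def by blast
      then show False using x0P a by simp
    qed
  qed
  show "paired (insert x0 G)"
    unfolding paired_def
  proof (intro ballI impI)
    fix y assume y: "y \<in> insert x0 G" and ev: "even (rk (insert x0 G) y)"
    have yS: "S \<le> y" using y G PS a by (auto intro: less_imp_le)
    show "Suc y \<in> insert x0 G"
    proof (cases "y < x0")
      case True
      show ?thesis
      proof (cases "Suc y = x0")
        case True then show ?thesis by simp
      next
        case False
        then show ?thesis using run[of "Suc y"] yS \<open>y < x0\<close> by simp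
      qed
    next
      case False
      show ?thesis
      proof (cases "y = x0")
        case True
        have "{z\<in>insert x0 G. z < x0} = insert S {z\<in>P. z < x0}" using G a by auto
        then have "rk (insert x0 G) y = Suc (rk P x0)" unfolding rk_def using True finP SP by simp
        then show ?thesis using ev rkev by simp
      next
        case False
        then have "x0 < y" using \<open>\<not> y < x0\<close> by simp
        then have yP: "y \<in> P" using y G a by auto
        have "{z\<in>insert x0 G. z < y} = insert S (insert x0 {z\<in>P. z < y})" using G a \<open>x0 < y\<close> by auto
        then have "rk (insert x0 G) y = Suc (Suc (rk P y))" unfolding rk_def using finP SP x0P a by simp
        then have "even (rk P y)" using ev by simp
        then show ?thesis using pP yP G unfolding paired_def by blast
      qed
    qed
  qed
  show "\<And>x. x \<notin> G \<Longrightarrow> S < x \<Longrightarrow> paired (insert x G) \<Longrightarrow> x = x0"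
  proof -
    fix x assume xG: "x \<notin> G" and xS: "S < x" and pX: "paired (insert x G)"
    show "x = x0"
    proof (rule ccontr)
      assume ne: "x \<noteq> x0"
      have "x0 < x"
      proof (rule ccontr)
        assume "\<not> x0 < x"
        then have "x < x0" using ne by simp
        then show False using run[of x] xS xG by simp
      qed
      have m: "x0 - 1 \<in> insert x G" using run[of "x0 - 1"] a by simp
      have "even (rk (insert x G) (x0 - 1))"
      proof (cases "x0 - 1 = S")
        case True
        have e0: "{z\<in>insert x G. z < x0 - 1} = {}" using True G PS xS by fastforce
        show ?thesis unfolding rk_def e0 by simp
      next
        case False
        then have "S < x0 - 1" using a by simp
        then have "x0 - 1 \<in> G" using run[of "x0 - 1"] by simp
        then have pm: "x0 - 1 \<in> P" using G \<open>S < x0 - 1\<close> by auto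
        have e1: "{z\<in>insert x G. z < x0 - 1} = insert S {z\<in>P. z < x0 - 1}"
          using G \<open>S < x0 - 1\<close> \<open>x0 < x\<close> by auto
        have e2: "{z\<in>P. z < x0} = insert (x0 - 1) {z\<in>P. z < x0 - 1}" using pm a by auto
        have "rk P x0 = Suc (rk P (x0 - 1))" unfolding rk_def using e2 finP by simp
        then have "odd (rk P (x0 - 1))" using rkev by simp
        moreover have "rk (insert x G) (x0 - 1) = Suc (rk P (x0 - 1))" unfolding rk_def using e1 finP SP by simp
        ultimately show ?thesis by simp
      qed
      then have "Suc (x0 - 1) \<in> insert x G" using pX m unfolding paired_def by blast
      then show False using ne b a by simp
    qed
  qed
qed


lemma card_split:
  assumes "finite Z"
  shows "card Z = cle Z v + card {z\<in>Z. v < z}"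
proof -
  have "Z = {z\<in>Z. z \<le> v} \<union> {z\<in>Z. v < z}" by auto
  moreover have "{z\<in>Z. z \<le> v} \<inter> {z\<in>Z. v < z} = {}" by auto
  ultimately show ?thesis unfolding cle_def using assms
    by (metis (no_types, lifting) card_Un_disjoint finite_Un)
qed

lemma pos:
  assumes ab: "a + 1 < b" and be: "b \<le> e" and fX: "finite X" and cX: "card X = e - b + 3"
    and Xe: "X \<subseteq> {..e}" and x1: "\<exists>x\<in>X. x \<le> a" and x2: "2 \<le> card {x\<in>X. x \<le> a + 1}"
  shows "leq_p X ({a, a + 1} \<union> {b..e})"
proof -
  let ?Y = "{a, a + 1} \<union> {b..e}"
  have fY: "finite ?Y" by simp
  have cY: "card ?Y = e - b + 3"
  proof -
    have "card ?Y = card {a, a+1} + card {b..e}" using ab by (intro card_Un_disjoint) auto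
    then show ?thesis using be by simp
  qed
  show ?thesis
  proof (rule LQ[OF fX fY])
    show "card X = card ?Y" using cX cY by simp
    fix v
    show "cle ?Y v \<le> cle X v"
    proof (cases "v < b")
      case True
      show ?thesis
      proof (cases "v < a")
        case True
        have e0: "{z\<in>?Y. z \<le> v} = {}" using True ab by auto
        show ?thesis unfolding cle_def e0 by simp
      next
        case False
        show ?thesis
        proof (cases "v = a")
          case True
          have "{z\<in>?Y. z \<le> v} = {a}" using True ab by auto
          moreover have "{x\<in>X. x \<le> v} \<noteq> {}" using x1 True by auto
          moreover have "finite {x\<in>X. x \<le> v}" using fX by simp
          ultimately show ?thesis unfolding cle_def by (simp add: Suc_leI card_gt_0_iff)
        next
          case False
          then have "a < v" using \<open>\<not> v < a\<close> by simp
          have "{z\<in>?Y. z \<le> v} \<subseteq> {a, a+1}" using \<open>v < b\<close> by auto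
          then have "cle ?Y v \<le> card {a, a+1}" unfolding cle_def by (intro card_mono) auto
          then have "cle ?Y v \<le> 2" by simp
          moreover have "card {x\<in>X. x \<le> a + 1} \<le> cle X v" unfolding cle_def
            using fX \<open>a < v\<close> by (intro card_mono) auto
          ultimately show ?thesis using x2 by simp
        qed
      qed
    next
      case False
      then have vb: "b \<le> v" by simp
      have s1: "card X = cle X v + card {z\<in>X. v < z}" using card_split[OF fX] .
      have "{z\<in>X. v < z} \<subseteq> {v<..e}" using Xe by auto
      then have s2: "card {z\<in>X. v < z} \<le> e - v" using card_mono[of "{v<..e}"] by fastforce
      have s3: "card ?Y = cle ?Y v + card {z\<in>?Y. v < z}" using card_split[OF fY] .
      have "{v<..e} \<subseteq> {z\<in>?Y. v < z}" using vb by auto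
      then have s4: "e - v \<le> card {z\<in>?Y. v < z}" using card_mono[OF _ \<open>{v<..e} \<subseteq> _\<close>] fY by simp
      show ?thesis using s1 s2 s3 s4 cX cY by linarith
    qed
  qed
qed

lemma neg1:
  assumes "finite X" "finite Y" "leq_p X Y" "y \<in> Y" "y \<le> v"
  shows "\<exists>x\<in>X. x \<le> v"
proof -
  have "{z\<in>Y. z \<le> v} \<noteq> {}" using assms by auto
  then have "0 < cle Y v" unfolding cle_def using assms(2) by (simp add: card_gt_0_iff)
  then have "0 < cle X v" using LP[OF assms(1-3), of v] by linarith
  then show ?thesis unfolding cle_def by (metis (mono_tags, lifting) card.empty empty_Collect_eq less_irrefl)
qed

lemma neg3:
  assumes "finite X" "finite Y" "leq_p X Y" "\<And>y. y \<in> Y \<Longrightarrow> y \<le> v"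
  shows "\<And>x. x \<in> X \<Longrightarrow> x \<le> v"
proof -
  have "{z\<in>Y. z \<le> v} = Y" using assms(4) by auto
  then have "cle Y v = card X" unfolding cle_def using assms(3) by (simp add: leq_p_def)
  then have c: "card X \<le> card {z\<in>X. z \<le> v}" using LP[OF assms(1-3), of v] unfolding cle_def by simp
  have "{z\<in>X. z \<le> v} = X"
    using card_seteq[OF assms(1) _ c] by auto
  then show "\<And>x. x \<in> X \<Longrightarrow> x \<le> v" by auto
qed

lemma D_intro:
  assumes fG: "finite G" and cF: "\<And>F. F \<in> Fs \<Longrightarrow> card F = card G + 1"
    and X0: "X0 \<in> Fs" "G \<subseteq> X0"
    and U: "\<And>x. x \<notin> G \<Longrightarrow> insert x G \<in> Fs \<Longrightarrow> insert x G = X0"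
  shows "G \<in> bdry_facets Fs"
proof -
  have "{F \<in> Fs. G \<subseteq> F} = {X0}"
  proof (rule set_eqI, rule iffI)
    fix F assume F: "F \<in> {F \<in> Fs. G \<subseteq> F}"
    then have cFF: "card F = card G + 1" using cF by simp
    then have fF: "finite F" by (metis card.infinite add_is_0 one_neq_zero)
    have "card (F - G) = 1" using card_Diff_subset[OF fG] F cFF by simp
    then obtain x where x: "F - G = {x}" by (rule card_1_singletonE)
    then have "F = insert x G" "x \<notin> G" using F by auto
    then show "F \<in> {X0}" using U F by simp
  next
    fix F assume "F \<in> {X0}"
    then show "F \<in> {F \<in> Fs. G \<subseteq> F}" using X0 by simp
  qed
  then show ?thesis unfolding bdry_facets_def using X0 cF by auto
qed


definition Fj :: "nat \<Rightarrow> nat \<Rightarrow> nat \<Rightarrow> nat set" where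
  "Fj k n j = {j, j+1} \<union> {n + 4 - 2*k - j .. n - j + 1}"

lemma A_eq: "A_anti k n = {Fj k n i | i. 1 \<le> i \<and> i \<le> n div 2 - k + 1}"
  unfolding A_anti_def Fj_def by simp

lemma m_bound:
  fixes k n j :: nat
  assumes "k \<ge> 3" "n \<ge> 2*k+1" "j \<le> n div 2 - k + 1"
  shows "2*j + 2*k \<le> n + 2"
proof -
  have "k \<le> n div 2" using assms(2) by presburger
  moreover have "2 * (n div 2) \<le> n" by simp
  ultimately show ?thesis using assms(3) by linarith
qed

lemma Fj_props:
  assumes "k \<ge> 3" "n \<ge> 2*k+1" "1 \<le> j" "j \<le> n div 2 - k + 1"
  shows "j \<in> Fj k n j" "\<And>y. y \<in> Fj k n j \<Longrightarrow> j \<le> y \<and> y \<le> n - j + 1" "finite (Fj k n j)"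
proof -
  have mb: "2*j + 2*k \<le> n + 2" using m_bound assms by blast
  show "j \<in> Fj k n j" unfolding Fj_def by simp
  show "finite (Fj k n j)" unfolding Fj_def by simp
  fix y assume "y \<in> Fj k n j"
  then show "j \<le> y \<and> y \<le> n - j + 1" unfolding Fj_def using mb assms(1) by auto
qed

lemma BA_elim:
  assumes k: "k \<ge> 3" and n: "n \<ge> 2*k+1" and X: "X \<in> B_facets k n (A_anti k n)"
  shows "\<exists>j. 1 \<le> j \<and> j \<le> n div 2 - k + 1 \<and> (\<exists>x\<in>X. x \<le> j) \<and> (\<forall>x\<in>X. x \<le> n - j + 1)"
proof -
  obtain j where j: "1 \<le> j" "j \<le> n div 2 - k + 1" "leq_p X (Fj k n j)" and XF: "X \<in> Fam k 1 n"
    using X unfolding B_facets_def A_eq by blast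
  have fX: "finite X" using famD[OF XF] by simp
  note P = Fj_props[OF k n j(1,2)]
  have "\<exists>x\<in>X. x \<le> j" using neg1[OF fX P(3) j(3) P(1)] by simp
  moreover have "\<forall>x\<in>X. x \<le> n - j + 1" using neg3[OF fX P(3) j(3), of "n - j + 1"] P(2) by blast
  ultimately show ?thesis using j by blast
qed

lemma shift_img:
  assumes "k \<ge> 3" "n \<ge> 2*k+1" "2 \<le> j" "j \<le> n div 2 - k + 1"
  shows "(\<lambda>x. x - 1) ` Fj k n j = {j - 1, j - 1 + 1} \<union> {n + 3 - 2*k - j .. n - j}"
proof -
  have mb: "2*j + 2*k \<le> n + 2" using m_bound assms by blast
  define b where "b = n + 3 - 2*k - j"
  define e where "e = n - j"
  have hb: "n + 4 - 2*k - j = b + 1" using mb assms(1) unfolding b_def by linarith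
  have he: "n - j + 1 = e + 1" unfolding e_def by simp
  have hj: "j - 1 + 1 = j" using assms(3) by simp
  have F: "Fj k n j = {j, j+1} \<union> {b+1 .. e+1}" unfolding Fj_def hb he by simp
  have "(\<lambda>x. x - 1) ` ({j, j+1} \<union> {b+1 .. e+1}) = {j - 1, j} \<union> {b .. e}"
  proof (rule set_eqI, rule iffI)
    fix y assume "y \<in> (\<lambda>x. x - 1) ` ({j, j+1} \<union> {b+1 .. e+1})"
    then obtain x where x: "x \<in> {j, j+1} \<union> {b+1 .. e+1}" "y = x - 1" by blast
    show "y \<in> {j - 1, j} \<union> {b .. e}"
    proof (cases "x \<in> {j, j+1}")
      case True then show ?thesis using x by auto
    next
      case False
      then have "b + 1 \<le> x" "x \<le> e + 1" using x by auto
      then have "b \<le> y" "y \<le> e" using x(2) by linarith+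
      then show ?thesis by simp
    qed
  next
    fix y assume y: "y \<in> {j - 1, j} \<union> {b .. e}"
    have "y + 1 \<in> {j, j+1} \<union> {b+1 .. e+1}" using y hj by auto
    moreover have "y = (y + 1) - 1" by simp
    ultimately show "y \<in> (\<lambda>x. x - 1) ` ({j, j+1} \<union> {b+1 .. e+1})" by blast
  qed
  then show ?thesis unfolding F b_def[symmetric] e_def[symmetric] hj by simp
qed

lemma Min_Fj:
  assumes "k \<ge> 3" "n \<ge> 2*k+1" "1 \<le> j" "j \<le> n div 2 - k + 1"
  shows "Min (Fj k n j) = j"
  using Fj_props[OF assms] by (intro Min_eqI) auto

lemma BSh_elim:
  assumes k: "k \<ge> 3" and n: "n \<ge> 2*k+1" and X: "X \<in> B_facets k n (shift_down (A_anti k n))"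
  shows "\<exists>j. 2 \<le> j \<and> j \<le> n div 2 - k + 1 \<and> (\<exists>x\<in>X. x \<le> j - 1) \<and> (\<forall>x\<in>X. x \<le> n - j)"
proof -
  obtain Y where Y: "Y \<in> shift_down (A_anti k n)" "leq_p X Y" and XF: "X \<in> Fam k 1 n"
    using X unfolding B_facets_def by blast
  obtain j where j: "1 \<le> j" "j \<le> n div 2 - k + 1" "Min (Fj k n j) > 1" "Y = (\<lambda>x. x - 1) ` Fj k n j"
    using Y(1) unfolding shift_down_def A_eq by blast
  have j2: "2 \<le> j" using j Min_Fj[OF k n j(1,2)] by simp
  have fX: "finite X" using famD[OF XF] by simp
  note P = Fj_props[OF k n j(1,2)]
  have fY: "finite Y" using j(4) P(3) by simp
  have "j - 1 \<in> Y" using j(4) P(1) by blast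
  then have "\<exists>x\<in>X. x \<le> j - 1" using neg1[OF fX fY Y(2)] by simp
  moreover have "\<forall>x\<in>X. x \<le> n - j"
  proof -
    have "\<And>y. y \<in> Y \<Longrightarrow> y \<le> n - j" using j(4) P(2) by fastforce
    then show ?thesis using neg3[OF fX fY Y(2)] by blast
  qed
  ultimately show ?thesis using j2 j(2) by blast
qed

lemma BA_intro:
  assumes k: "k \<ge> 3" and n: "n \<ge> 2*k+1" and XF: "X \<in> Fam k 1 n"
    and j: "1 \<le> j" "j \<le> n div 2 - k + 1"
    and h: "\<forall>x\<in>X. x \<le> n - j + 1" "\<exists>x\<in>X. x \<le> j" "2 \<le> card {x\<in>X. x \<le> j + 1}"
  shows "X \<in> B_facets k n (A_anti k n)"
proof -
  have mb: "2*j + 2*k \<le> n + 2" using m_bound k n j(2) by blast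
  have D: "finite X" "card X = 2*k" using famD[OF XF] by auto
  have "leq_p X ({j, j + 1} \<union> {n + 4 - 2*k - j .. n - j + 1})"
    by (rule pos) (use mb k D h in auto)
  then have "leq_p X (Fj k n j)" unfolding Fj_def by simp
  moreover have "Fj k n j \<in> A_anti k n" unfolding A_eq using j by blast
  ultimately show ?thesis unfolding B_facets_def using XF by blast
qed

lemma BSh_intro:
  assumes k: "k \<ge> 3" and n: "n \<ge> 2*k+1" and XF: "X \<in> Fam k 1 n"
    and j: "2 \<le> j" "j \<le> n div 2 - k + 1"
    and h: "\<forall>x\<in>X. x \<le> n - j" "\<exists>x\<in>X. x \<le> j - 1" "2 \<le> card {x\<in>X. x \<le> j}"
  shows "X \<in> B_facets k n (shift_down (A_anti k n))"
proof -
  have mb: "2*j + 2*k \<le> n + 2" using m_bound k n j(2) by blast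
  have D: "finite X" "card X = 2*k" using famD[OF XF] by auto
  have h3: "2 \<le> card {x\<in>X. x \<le> j - 1 + 1}" using h(3) j(1) by simp
  have "leq_p X ({j - 1, j - 1 + 1} \<union> {n + 3 - 2*k - j .. n - j})"
    by (rule pos) (use mb k D h h3 j in auto)
  then have "leq_p X ((\<lambda>x. x - 1) ` Fj k n j)" using shift_img[OF k n j] by simp
  moreover have "(\<lambda>x. x - 1) ` Fj k n j \<in> shift_down (A_anti k n)"
    unfolding shift_down_def A_eq using j Min_Fj[OF k n _ j(2)] by fastforce
  ultimately show ?thesis unfolding B_facets_def using XF by blast
qed


lemma finish:
  assumes k: "k \<ge> 3" and fG: "finite G" and cG: "card G + 1 = 2*k"
    and X0: "X0 \<in> BS_facets k n (A_anti k n)" "G \<subseteq> X0"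
    and U: "\<And>x. x \<notin> G \<Longrightarrow> insert x G \<in> BS_facets k n (A_anti k n) \<Longrightarrow> insert x G = X0"
  shows "G \<in> bdry_facets (BS_facets k n (A_anti k n))"
proof (rule D_intro[OF fG _ X0 U])
  fix F assume "F \<in> BS_facets k n (A_anti k n)"
  then have "F \<in> Fam k 1 n" unfolding BS_facets_def B_facets_def by blast
  then show "card F = card G + 1" using famD cG by simp
qed auto

lemma BS_D:
  assumes "X \<in> BS_facets k n (A_anti k n)"
  shows "X \<in> Fam k 1 n" "X \<in> B_facets k n (A_anti k n)" "X \<notin> B_facets k n (shift_down (A_anti k n))"
  using assms unfolding BS_facets_def B_facets_def by auto

lemma BS_I:
  assumes "X \<in> B_facets k n (A_anti k n)" "X \<notin> B_facets k n (shift_down (A_anti k n))"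
  shows "X \<in> BS_facets k n (A_anti k n)"
  using assms unfolding BS_facets_def by auto

lemma card_ge2:
  assumes "finite X" "a \<in> X" "b \<in> X" "a \<noteq> b" "a \<le> v" "b \<le> v"
  shows "2 \<le> card {x\<in>X. x \<le> v}"
proof -
  have "{a, b} \<subseteq> {x\<in>X. x \<le> v}" using assms by auto
  then have "card {a, b} \<le> card {x\<in>X. x \<le> v}" using assms(1) by (intro card_mono) auto
  then show ?thesis using assms(4) by simp
qed

lemma rk0_succ:
  assumes "paired X" "x \<in> X" "\<And>z. z \<in> X \<Longrightarrow> x \<le> z"
  shows "Suc x \<in> X"
proof -
  have "{z\<in>X. z < x} = {}" using assms(3) by fastforce
  then have "rk X x = 0" unfolding rk_def by simp
  then show ?thesis using assms(1,2) unfolding paired_def by simp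
qed


lemma case1:
  assumes k: "k \<ge> 3" and n: "n \<ge> 2*k+1" and i: "1 \<le> i" "i \<le> n div 2 - k + 1"
    and H: "H \<in> Fam (k-2) (i+2) (n-i)"
  shows "{i, i+1} \<union> H \<union> {n-i+1} \<in> bdry_facets (BS_facets k n (A_anti k n))"
proof -
  have mb: "2*i + 2*k \<le> n + 2" using m_bound k n i(2) by blast
  have hH: "finite H" "card H = 2*(k-2)" "H \<subseteq> {i+2..n-i}" "paired H" using famD[OF H] by auto
  define L where "L = n - i + 1"
  define P where "P = {i, Suc i} \<union> H"
  define G where "G = insert L P"
  have Geq: "{i, i+1} \<union> H \<union> {n-i+1} = G" unfolding G_def P_def L_def by auto
  have finP: "finite P" unfolding P_def using hH by simp
  have pP: "paired P" unfolding P_def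
    by (rule paired_union) (use hH paired_pair in auto)
  have a1: "i + 2 \<le> n - i" using mb k by linarith
  have PL: "\<And>p. p \<in> P \<Longrightarrow> p < L" unfolding P_def L_def using hH(3) a1 by auto
  have cP: "card P = 2*k - 2"
  proof -
    have "card P = card {i, Suc i} + card H" unfolding P_def
      by (rule card_Un_disjoint) (use hH in auto)
    then show ?thesis using hH(2) k by simp
  qed
  have LnP: "L \<notin> P" using PL by blast
  have fG: "finite G" unfolding G_def using finP by simp
  have cG: "card G + 1 = 2*k" unfolding G_def using cP finP LnP k by simp
  have Gge: "\<And>z. z \<in> G \<Longrightarrow> i \<le> z \<and> z \<le> L"
    unfolding G_def P_def L_def using hH(3) a1 by auto
  have ex: "\<exists>y<L. y \<notin> G" using Gge i(1) L_def by (intro exI[of _ 0]) fastforce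
  define x0 where "x0 = Max {y. y < L \<and> y \<notin> G}"
  note R = run_before[OF finP pP PL G_def ex x0_def]
  have iG: "i \<in> G" "Suc i \<in> G" unfolding G_def P_def by auto
  have x0i: "i + 2 \<le> x0"
  proof (rule ccontr)
    assume "\<not> i + 2 \<le> x0"
    then have "x0 < i" using R(2) iG by (cases "x0 = i \<or> x0 = Suc i") auto
    then have "{i..L} \<subseteq> G" using R(3) by auto
    then have "card {i..L} \<le> card G" using fG by (intro card_mono) auto
    moreover have "card {i..L} = L + 1 - i" by simp
    ultimately show False using cG mb L_def by linarith
  qed
  define X0 where "X0 = insert x0 G"
  have fX0: "finite X0" unfolding X0_def using fG by simp
  have cX0: "card X0 = 2*k" unfolding X0_def using fG R(2) cG by simp
  have X0r: "\<And>z. z \<in> X0 \<Longrightarrow> i \<le> z \<and> z \<le> L"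
    unfolding X0_def using Gge x0i R(1) by auto
  have X0F: "X0 \<in> Fam k 1 n"
  proof (rule famI[OF fX0 cX0])
    show "0 < k" using k by simp
    have Ln: "L \<le> n" using i(1) a1 L_def by linarith
    show "X0 \<subseteq> {1..n}"
    proof
      fix z assume "z \<in> X0"
      then show "z \<in> {1..n}" using X0r[of z] i(1) Ln by auto
    qed
    show "paired X0" unfolding X0_def by (rule R(4))
  qed
  have X0A: "X0 \<in> B_facets k n (A_anti k n)"
  proof (rule BA_intro[OF k n X0F i])
    show "\<forall>x\<in>X0. x \<le> n - i + 1" using X0r L_def by auto
    show "\<exists>x\<in>X0. x \<le> i" using iG X0_def by auto
    show "2 \<le> card {x\<in>X0. x \<le> i + 1}" using card_ge2[OF fX0, of i "Suc i"] iG X0_def by auto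
  qed
  have X0S: "X0 \<notin> B_facets k n (shift_down (A_anti k n))"
  proof
    assume "X0 \<in> B_facets k n (shift_down (A_anti k n))"
    then obtain j where j: "2 \<le> j" "\<exists>x\<in>X0. x \<le> j - 1" "\<forall>x\<in>X0. x \<le> n - j"
      using BSh_elim[OF k n] by blast
    have "i \<le> j - 1" using j(2) X0r by force
    moreover have "L \<le> n - j" using j(3) X0_def G_def by simp
    ultimately show False using L_def j(1) by linarith
  qed
  have X0BS: "X0 \<in> BS_facets k n (A_anti k n)" by (rule BS_I[OF X0A X0S])
  show ?thesis unfolding Geq
  proof (rule finish[OF k fG cG X0BS])
    show "G \<subseteq> X0" unfolding X0_def by auto
    fix x assume xG: "x \<notin> G" and xB: "insert x G \<in> BS_facets k n (A_anti k n)"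
    have xF: "insert x G \<in> Fam k 1 n" using BS_D(1)[OF xB] .
    have pX: "paired (insert x G)" using famD[OF xF] by simp
    show "insert x G = X0"
    proof (cases "x < L")
      case True
      have "x = x0" using R(5) xG True pX by blast
      then show ?thesis using X0_def by simp
    next
      case False
      then have xL: "L < x" using xG G_def by (cases "x = L") auto
      obtain j where j: "\<exists>z\<in>insert x G. z \<le> j" "\<forall>z\<in>insert x G. z \<le> n - j + 1"
        using BA_elim[OF k n BS_D(2)[OF xB]] by blast
      obtain z where z: "z \<in> insert x G" "z \<le> j" using j(1) by blast
      have "i \<le> z"
      proof (cases "z = x")
        case True then show ?thesis using Gge[of L] G_def xL by auto
      next
        case False then show ?thesis using z Gge by auto
      qed
      then have "i \<le> j" using z(2) by simp
      moreover have "x \<le> n - j + 1" using j(2) by simp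
      ultimately show ?thesis using xL L_def by linarith
    qed
  qed
qed


lemma n_facts:
  fixes k n :: nat
  assumes "k \<ge> 3" "n \<ge> 2*k+1"
  shows "k \<le> n div 2" "n \<le> 2*(n div 2) + 1" "2*(n div 2) \<le> n" "(n+1) div 2 = n - n div 2"
  using assms by presburger+

lemma case2:
  assumes k: "k \<ge> 3" and n: "n \<ge> 2*k+1" and i: "1 \<le> i" "i \<le> n div 2 - k + 1"
    and H: "H \<in> Fam (k-2) (i+2) (n-i-2)"
  shows "{i, i+1} \<union> H \<union> {n-i-1} \<in> bdry_facets (BS_facets k n (A_anti k n))"
proof -
  have mb: "2*i + 2*k \<le> n + 2" using m_bound k n i(2) by blast
  have a1: "i + 2 \<le> n - i - 2" using mb k by linarith
  have hH: "finite H" "card H = 2*(k-2)" "H \<subseteq> {i+2..n-i-2}" "paired H" using famD[OF H] by auto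
  define L where "L = n - i - 1"
  have SL: "Suc L = n - i" using a1 L_def by linarith
  define Q where "Q = {i, Suc i} \<union> H"
  define G where "G = {i, i+1} \<union> H \<union> {n-i-1}"
  have GQ: "G = insert L Q" unfolding G_def Q_def L_def by auto
  have finQ: "finite Q" unfolding Q_def using hH by simp
  have pQ: "paired Q" unfolding Q_def
    by (rule paired_union) (use hH paired_pair in auto)
  have Hb: "\<And>h. h \<in> H \<Longrightarrow> i + 2 \<le> h \<and> h \<le> n - i - 2" using hH(3) by auto
  have Qr: "\<And>q. q \<in> Q \<Longrightarrow> i \<le> q \<and> q < L"
  proof -
    fix q assume "q \<in> Q"
    then have "q = i \<or> q = Suc i \<or> q \<in> H" unfolding Q_def by auto
    then show "i \<le> q \<and> q < L"
    proof (elim disjE)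
      assume "q \<in> H" then show ?thesis using Hb[of q] a1 L_def by linarith
    qed (use a1 L_def in linarith)+
  qed
  have cQ: "card Q = 2*k - 2"
  proof -
    have "card Q = card {i, Suc i} + card H" unfolding Q_def
      by (rule card_Un_disjoint) (use hH in auto)
    then show ?thesis using hH(2) k by simp
  qed
  have LnQ: "L \<notin> Q" using Qr by blast
  have fG: "finite G" unfolding GQ using finQ by simp
  have cG: "card G + 1 = 2*k" unfolding GQ using cQ finQ LnQ k by simp
  have Gr: "\<And>z. z \<in> G \<Longrightarrow> i \<le> z \<and> z \<le> L" unfolding GQ using Qr a1 L_def by fastforce
  define X0 where "X0 = Q \<union> {L, Suc L}"
  have X0G: "X0 = insert (Suc L) G" unfolding X0_def GQ by auto
  have SLG: "Suc L \<notin> G" using Gr by fastforce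
  have fX0: "finite X0" unfolding X0G using fG by simp
  have cX0: "card X0 = 2*k" unfolding X0G using fG SLG cG by simp
  have X0r: "\<And>z. z \<in> X0 \<Longrightarrow> i \<le> z \<and> z \<le> n - i"
  proof -
    fix z assume "z \<in> X0"
    then have "z = Suc L \<or> z \<in> G" unfolding X0G by auto
    then show "i \<le> z \<and> z \<le> n - i"
    proof
      assume "z \<in> G" then show ?thesis using Gr[of z] SL by linarith
    qed (use SL a1 in linarith)
  qed
  have iX0: "i \<in> X0" "Suc i \<in> X0" "n - i \<in> X0" unfolding X0_def Q_def using SL by auto
  have X0F: "X0 \<in> Fam k 1 n"
  proof (rule famI[OF fX0 cX0])
    show "0 < k" using k by simp
    show "X0 \<subseteq> {1..n}"
    proof
      fix z assume "z \<in> X0"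
      then show "z \<in> {1..n}" using X0r[of z] i(1) by auto
    qed
    have lt: "\<And>p q. p \<in> Q \<Longrightarrow> q \<in> {L, Suc L} \<Longrightarrow> p < q"
    proof -
      fix p q assume "p \<in> Q" "q \<in> {L, Suc L}"
      then show "p < q" using Qr[of p] by auto
    qed
    show "paired X0" unfolding X0_def
      by (rule paired_union[OF finQ _ pQ paired_pair lt]) auto
  qed
  have X0A: "X0 \<in> B_facets k n (A_anti k n)"
  proof (rule BA_intro[OF k n X0F i])
    show "\<forall>x\<in>X0. x \<le> n - i + 1" using X0r by fastforce
    show "\<exists>x\<in>X0. x \<le> i" using iX0 by auto
    show "2 \<le> card {x\<in>X0. x \<le> i + 1}" using card_ge2[OF fX0, of i "Suc i"] iX0 by auto
  qed
  have X0S: "X0 \<notin> B_facets k n (shift_down (A_anti k n))"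
  proof
    assume "X0 \<in> B_facets k n (shift_down (A_anti k n))"
    then obtain j where j: "2 \<le> j" "\<exists>x\<in>X0. x \<le> j - 1" "\<forall>x\<in>X0. x \<le> n - j"
      using BSh_elim[OF k n] by blast
    have "i \<le> j - 1" using j(2) X0r by force
    moreover have "n - i \<le> n - j" using j(3) iX0 by simp
    ultimately show False using a1 j(1) by linarith
  qed
  have X0BS: "X0 \<in> BS_facets k n (A_anti k n)" by (rule BS_I[OF X0A X0S])
  have GX0: "G \<subseteq> X0" unfolding X0G by auto
  show ?thesis unfolding G_def[symmetric]
  proof (rule finish[OF k fG cG X0BS GX0])
    fix x assume xG: "x \<notin> G" and xB: "insert x G \<in> BS_facets k n (A_anti k n)"
    have xF: "insert x G \<in> Fam k 1 n" using BS_D(1)[OF xB] .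
    have pX: "paired (insert x G)" and fX: "finite (insert x G)" and cX: "card (insert x G) = 2*k"
      and rX: "insert x G \<subseteq> {1..n}" using famD[OF xF] by auto
    have nS: "insert x G \<notin> B_facets k n (shift_down (A_anti k n))" using BS_D(3)[OF xB] .
    have x1: "1 \<le> x" using rX by auto
    show "insert x G = X0"
    proof (cases "L < x")
      case True
      have "{z\<in>insert x G. z < L} = Q" unfolding GQ using True Qr by auto
      then have "rk (insert x G) L = 2*k - 2" unfolding rk_def using cQ by simp
      then have "even (rk (insert x G) L)" by simp
      moreover have "L \<in> insert x G" unfolding GQ by simp
      ultimately have "Suc L \<in> insert x G" using pX unfolding paired_def by blast
      then have "x = Suc L" using SLG by simp
      then show ?thesis using X0G by simp
    next
      case False
      then have xL: "x < L" using xG GQ by (cases "x = L") auto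
      show ?thesis
      proof (cases "x < i")
        case True
        have "insert x G \<in> B_facets k n (shift_down (A_anti k n))"
        proof (rule BSh_intro[OF k n xF])
          show "2 \<le> i" using True x1 by simp
          show "i \<le> n div 2 - k + 1" using i(2) .
          show "\<forall>z\<in>insert x G. z \<le> n - i" using Gr xL L_def a1 by fastforce
          show "\<exists>z\<in>insert x G. z \<le> i - 1" using True by auto
          show "2 \<le> card {z\<in>insert x G. z \<le> i}"
            by (rule card_ge2[OF fX, of x i]) (use True GQ Q_def in auto)
        qed
        then show ?thesis using nS by simp
      next
        case False
        have xi: "i + 2 \<le> x" using False xG G_def by (cases "x = i \<or> x = Suc i") auto
        show ?thesis
        proof (cases "i + 1 \<le> n div 2 - k + 1")
          case True
          have "insert x G \<in> B_facets k n (shift_down (A_anti k n))"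
          proof (rule BSh_intro[OF k n xF])
            show "2 \<le> i + 1" using i(1) by simp
            show "i + 1 \<le> n div 2 - k + 1" using True .
            show "\<forall>z\<in>insert x G. z \<le> n - (i + 1)" using Gr xL L_def by fastforce
            show "\<exists>z\<in>insert x G. z \<le> i + 1 - 1" unfolding GQ Q_def by auto
            show "2 \<le> card {z\<in>insert x G. z \<le> i + 1}"
              by (rule card_ge2[OF fX, of i "Suc i"]) (use GQ Q_def in auto)
          qed
          then show ?thesis using nS by simp
        next
          case False
          then have im: "i = n div 2 - k + 1" using i(2) by simp
          have "insert x G \<subseteq> {i..L}" using Gr xi xL by fastforce
          then have "card (insert x G) \<le> card {i..L}" by (intro card_mono) auto
          moreover have "card {i..L} = L + 1 - i" by simp
          moreover note nf = n_facts[OF k n]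
          ultimately show ?thesis using cX im L_def a1 by linarith
        qed
      qed
    qed
  qed
qed


lemma case3:
  assumes k: "k \<ge> 3" and n: "n \<ge> 2*k+1" and i: "1 \<le> i" "i \<le> n div 2 - k + 1"
    and H: "H \<in> Fam (k-2) (i+2) (n-i-1)"
  shows "{i+1} \<union> H \<union> {n-i, n-i+1} \<in> bdry_facets (BS_facets k n (A_anti k n))"
proof -
  have mb: "2*i + 2*k \<le> n + 2" using m_bound k n i(2) by blast
  have a1: "i + 2 \<le> n - i - 2" using mb k by linarith
  have hH: "finite H" "card H = 2*(k-2)" "H \<subseteq> {i+2..n-i-1}" "paired H" using famD[OF H] by auto
  have Hb: "\<And>h. h \<in> H \<Longrightarrow> i + 2 \<le> h \<and> h \<le> n - i - 1" using hH(3) by auto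
  define L where "L = n - i"
  have SL: "Suc L = n - i + 1" using L_def by simp
  define Q where "Q = H \<union> {L, Suc L}"
  define G where "G = {i+1} \<union> H \<union> {n-i, n-i+1}"
  have GQ: "G = insert (Suc i) Q" unfolding G_def Q_def L_def by auto
  have finQ: "finite Q" unfolding Q_def using hH by simp
  have lt1: "\<And>p q. p \<in> H \<Longrightarrow> q \<in> {L, Suc L} \<Longrightarrow> p < q"
  proof -
    fix p q assume "p \<in> H" "q \<in> {L, Suc L}"
    then show "p < q" using Hb[of p] L_def a1 by auto
  qed
  have pQ: "paired Q" unfolding Q_def
    by (rule paired_union[OF hH(1) _ hH(4) paired_pair lt1]) auto
  have Qr: "\<And>q. q \<in> Q \<Longrightarrow> i + 2 \<le> q \<and> q \<le> n - i + 1"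
  proof -
    fix q assume "q \<in> Q"
    then have "q \<in> H \<or> q = L \<or> q = Suc L" unfolding Q_def by auto
    then show "i + 2 \<le> q \<and> q \<le> n - i + 1"
    proof (elim disjE)
      assume "q \<in> H" then show ?thesis using Hb[of q] by linarith
    qed (use a1 L_def in linarith)+
  qed
  have cQ: "card Q = 2*k - 2"
  proof -
    have "card Q = card H + card {L, Suc L}" unfolding Q_def
      by (rule card_Un_disjoint) (use hH lt1 in auto)
    then show ?thesis using hH(2) k by simp
  qed
  have iQ: "Suc i \<notin> Q" "i \<notin> Q" using Qr by fastforce+
  have fG: "finite G" unfolding GQ using finQ by simp
  have cG: "card G + 1 = 2*k" unfolding GQ using cQ finQ iQ k by simp
  have Gr: "\<And>z. z \<in> G \<Longrightarrow> i + 1 \<le> z \<and> z \<le> n - i + 1" unfolding GQ using Qr a1 by fastforce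
  define X0 where "X0 = {i, Suc i} \<union> Q"
  have X0G: "X0 = insert i G" unfolding X0_def GQ by auto
  have iG: "i \<notin> G" using Gr by fastforce
  have fX0: "finite X0" unfolding X0G using fG by simp
  have cX0: "card X0 = 2*k" unfolding X0G using fG iG cG by simp
  have X0r: "\<And>z. z \<in> X0 \<Longrightarrow> i \<le> z \<and> z \<le> n - i + 1"
  proof -
    fix z assume "z \<in> X0"
    then have "z = i \<or> z \<in> G" unfolding X0G by auto
    then show "i \<le> z \<and> z \<le> n - i + 1"
    proof
      assume "z \<in> G" then show ?thesis using Gr[of z] by linarith
    qed (use a1 in linarith)
  qed
  have iX0: "i \<in> X0" "Suc i \<in> X0" "n - i + 1 \<in> X0" unfolding X0_def Q_def L_def by auto
  have X0F: "X0 \<in> Fam k 1 n"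
  proof (rule famI[OF fX0 cX0])
    show "0 < k" using k by simp
    show "X0 \<subseteq> {1..n}"
    proof
      fix z assume "z \<in> X0"
      then show "z \<in> {1..n}" using X0r[of z] i(1) a1 by auto
    qed
    have lt: "\<And>p q. p \<in> {i, Suc i} \<Longrightarrow> q \<in> Q \<Longrightarrow> p < q"
    proof -
      fix p q assume "p \<in> {i, Suc i}" "q \<in> Q"
      then show "p < q" using Qr[of q] by auto
    qed
    show "paired X0" unfolding X0_def
      by (rule paired_union[OF _ finQ paired_pair pQ lt]) auto
  qed
  have X0A: "X0 \<in> B_facets k n (A_anti k n)"
  proof (rule BA_intro[OF k n X0F i])
    show "\<forall>x\<in>X0. x \<le> n - i + 1" using X0r by fastforce
    show "\<exists>x\<in>X0. x \<le> i" using iX0 by auto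
    show "2 \<le> card {x\<in>X0. x \<le> i + 1}" using card_ge2[OF fX0, of i "Suc i"] iX0 by auto
  qed
  have X0S: "X0 \<notin> B_facets k n (shift_down (A_anti k n))"
  proof
    assume "X0 \<in> B_facets k n (shift_down (A_anti k n))"
    then obtain j where j: "2 \<le> j" "\<exists>x\<in>X0. x \<le> j - 1" "\<forall>x\<in>X0. x \<le> n - j"
      using BSh_elim[OF k n] by blast
    have "i \<le> j - 1" using j(2) X0r by force
    moreover have "n - i + 1 \<le> n - j" using j(3) iX0 by simp
    ultimately show False using a1 j(1) by linarith
  qed
  have X0BS: "X0 \<in> BS_facets k n (A_anti k n)" by (rule BS_I[OF X0A X0S])
  have GX0: "G \<subseteq> X0" unfolding X0G by auto
  show ?thesis unfolding G_def[symmetric]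
  proof (rule finish[OF k fG cG X0BS GX0])
    fix x assume xG: "x \<notin> G" and xB: "insert x G \<in> BS_facets k n (A_anti k n)"
    have xF: "insert x G \<in> Fam k 1 n" using BS_D(1)[OF xB] .
    have pX: "paired (insert x G)" using famD[OF xF] by auto
    show "insert x G = X0"
    proof (cases "i + 1 < x")
      case True
      obtain j where j: "\<exists>z\<in>insert x G. z \<le> j" "\<forall>z\<in>insert x G. z \<le> n - j + 1"
        using BA_elim[OF k n BS_D(2)[OF xB]] by blast
      obtain z where z: "z \<in> insert x G" "z \<le> j" using j(1) by blast
      have "i + 1 \<le> z" using z Gr True by auto
      moreover have "n - i + 1 \<le> n - j + 1" using j(2) GQ Q_def L_def by auto
      ultimately show ?thesis using z(2) a1 by linarith
    next
      case False
      then have xi: "x \<le> i" using xG GQ by (cases "x = Suc i") auto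
      have "Suc x \<in> insert x G"
        by (rule rk0_succ[OF pX]) (use Gr xi in fastforce)+
      then have "Suc x \<in> G" by simp
      then have "x = i" using Gr[of "Suc x"] xi by simp
      then show ?thesis using X0G by simp
    qed
  qed
qed


lemma case4:
  assumes k: "k \<ge> 3" and n: "n \<ge> 2*k+1" and i: "1 \<le> i" "i \<le> n div 2 - k + 1"
    and H: "H \<in> Fam (k-2) (i+2) (n-i-2)"
  shows "{i} \<union> H \<union> {n-i-1, n-i} \<in> bdry_facets (BS_facets k n (A_anti k n))"
proof -
  have mb: "2*i + 2*k \<le> n + 2" using m_bound k n i(2) by blast
  have a1: "i + 2 \<le> n - i - 2" using mb k by linarith
  have hH: "finite H" "card H = 2*(k-2)" "H \<subseteq> {i+2..n-i-2}" "paired H" using famD[OF H] by auto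
  have Hb: "\<And>h. h \<in> H \<Longrightarrow> i + 2 \<le> h \<and> h \<le> n - i - 2" using hH(3) by auto
  define L where "L = n - i - 1"
  have SL: "Suc L = n - i" using L_def a1 by simp
  define Q where "Q = H \<union> {L, Suc L}"
  define G where "G = {i} \<union> H \<union> {n-i-1, n-i}"
  have GQ: "G = insert i Q" unfolding G_def Q_def L_def using SL L_def by auto
  have finQ: "finite Q" unfolding Q_def using hH by simp
  have lt1: "\<And>p q. p \<in> H \<Longrightarrow> q \<in> {L, Suc L} \<Longrightarrow> p < q"
  proof -
    fix p q assume "p \<in> H" "q \<in> {L, Suc L}"
    then show "p < q" using Hb[of p] L_def a1 by auto
  qed
  have pQ: "paired Q" unfolding Q_def
    by (rule paired_union[OF hH(1) _ hH(4) paired_pair lt1]) auto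
  have Qr: "\<And>q. q \<in> Q \<Longrightarrow> i + 2 \<le> q \<and> q \<le> n - i"
  proof -
    fix q assume "q \<in> Q"
    then have "q \<in> H \<or> q = L \<or> q = Suc L" unfolding Q_def by auto
    then show "i + 2 \<le> q \<and> q \<le> n - i"
    proof (elim disjE)
      assume "q \<in> H" then show ?thesis using Hb[of q] by linarith
    qed (use a1 L_def SL in linarith)+
  qed
  have cQ: "card Q = 2*k - 2"
  proof -
    have "card Q = card H + card {L, Suc L}" unfolding Q_def
      by (rule card_Un_disjoint) (use hH lt1 in auto)
    then show ?thesis using hH(2) k by simp
  qed
  have iQ: "Suc i \<notin> Q" "i \<notin> Q" using Qr by fastforce+
  have fG: "finite G" unfolding GQ using finQ by simp
  have cG: "card G + 1 = 2*k" unfolding GQ using cQ finQ iQ k by simp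
  have Gr: "\<And>z. z \<in> G \<Longrightarrow> i \<le> z \<and> z \<le> n - i"
  proof -
    fix z assume "z \<in> G"
    then have "z = i \<or> z \<in> Q" unfolding GQ by auto
    then show "i \<le> z \<and> z \<le> n - i"
    proof
      assume "z \<in> Q" then show ?thesis using Qr[of z] by linarith
    qed (use a1 in linarith)
  qed
  define X0 where "X0 = {i, Suc i} \<union> Q"
  have X0G: "X0 = insert (Suc i) G" unfolding X0_def GQ by auto
  have iG: "Suc i \<notin> G" using GQ iQ by simp
  have fX0: "finite X0" unfolding X0G using fG by simp
  have cX0: "card X0 = 2*k" unfolding X0G using fG iG cG by simp
  have X0r: "\<And>z. z \<in> X0 \<Longrightarrow> i \<le> z \<and> z \<le> n - i"
  proof -
    fix z assume "z \<in> X0"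
    then have "z = Suc i \<or> z \<in> G" unfolding X0G by auto
    then show "i \<le> z \<and> z \<le> n - i"
    proof
      assume "z \<in> G" then show ?thesis using Gr[of z] by linarith
    qed (use a1 in linarith)
  qed
  have iX0: "i \<in> X0" "Suc i \<in> X0" "n - i \<in> X0" unfolding X0_def Q_def using SL by auto
  have X0F: "X0 \<in> Fam k 1 n"
  proof (rule famI[OF fX0 cX0])
    show "0 < k" using k by simp
    show "X0 \<subseteq> {1..n}"
    proof
      fix z assume "z \<in> X0"
      then show "z \<in> {1..n}" using X0r[of z] i(1) a1 by auto
    qed
    have lt: "\<And>p q. p \<in> {i, Suc i} \<Longrightarrow> q \<in> Q \<Longrightarrow> p < q"
    proof -
      fix p q assume "p \<in> {i, Suc i}" "q \<in> Q"
      then show "p < q" using Qr[of q] by auto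
    qed
    show "paired X0" unfolding X0_def
      by (rule paired_union[OF _ finQ paired_pair pQ lt]) auto
  qed
  have X0A: "X0 \<in> B_facets k n (A_anti k n)"
  proof (rule BA_intro[OF k n X0F i])
    show "\<forall>x\<in>X0. x \<le> n - i + 1" using X0r by fastforce
    show "\<exists>x\<in>X0. x \<le> i" using iX0 by auto
    show "2 \<le> card {x\<in>X0. x \<le> i + 1}" using card_ge2[OF fX0, of i "Suc i"] iX0 by auto
  qed
  have X0S: "X0 \<notin> B_facets k n (shift_down (A_anti k n))"
  proof
    assume "X0 \<in> B_facets k n (shift_down (A_anti k n))"
    then obtain j where j: "2 \<le> j" "\<exists>x\<in>X0. x \<le> j - 1" "\<forall>x\<in>X0. x \<le> n - j"
      using BSh_elim[OF k n] by blast
    have "i \<le> j - 1" using j(2) X0r by force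
    moreover have "n - i \<le> n - j" using j(3) iX0 by simp
    ultimately show False using a1 j(1) by linarith
  qed
  have X0BS: "X0 \<in> BS_facets k n (A_anti k n)" by (rule BS_I[OF X0A X0S])
  have GX0: "G \<subseteq> X0" unfolding X0G by auto
  show ?thesis unfolding G_def[symmetric]
  proof (rule finish[OF k fG cG X0BS GX0])
    fix x assume xG: "x \<notin> G" and xB: "insert x G \<in> BS_facets k n (A_anti k n)"
    have xF: "insert x G \<in> Fam k 1 n" using BS_D(1)[OF xB] .
    have pX: "paired (insert x G)" and fX: "finite (insert x G)"
      and rX: "insert x G \<subseteq> {1..n}" using famD[OF xF] by auto
    have nS: "insert x G \<notin> B_facets k n (shift_down (A_anti k n))" using BS_D(3)[OF xB] .
    have x1: "1 \<le> x" using rX by auto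
    show "insert x G = X0"
    proof (cases "i < x")
      case True
      have "Suc i \<in> insert x G"
        by (rule rk0_succ[OF pX]) (use Gr True GQ in fastforce)+
      then have "x = Suc i" using iG by simp
      then show ?thesis using X0G by simp
    next
      case False
      then have xi: "x < i" using xG GQ by (cases "x = i") auto
      have "insert x G \<in> B_facets k n (shift_down (A_anti k n))"
      proof (rule BSh_intro[OF k n xF])
        show "2 \<le> i" using xi x1 by simp
        show "i \<le> n div 2 - k + 1" using i(2) .
        show "\<forall>z\<in>insert x G. z \<le> n - i" using Gr xi a1 by fastforce
        show "\<exists>z\<in>insert x G. z \<le> i - 1" using xi by auto
        show "2 \<le> card {z\<in>insert x G. z \<le> i}"
          by (rule card_ge2[OF fX, of x i]) (use xi GQ in auto)
      qed
      then show ?thesis using nS by simp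
    qed
  qed
qed


lemma case5:
  assumes k: "k \<ge> 3" and n: "n \<ge> 2*k+1"
    and H: "H \<in> Fam (k-2) 2 (n-2)"
  shows "{1} \<union> H \<union> {n-1, n} \<in> bdry_facets (BS_facets k n (A_anti k n))"
proof -
  have hH: "finite H" "card H = 2*(k-2)" "paired H" using famD[OF H] by auto
  have Hb: "\<And>h. h \<in> H \<Longrightarrow> 2 \<le> h \<and> h \<le> n - 2" using famD[OF H] by auto
  define L where "L = n - 1"
  have SL: "Suc L = n" using L_def n by simp
  define P where "P = H \<union> {L, Suc L}"
  define G where "G = {1} \<union> H \<union> {n-1, n}"
  have GP: "G = insert 1 P" unfolding G_def P_def L_def using SL L_def by auto
  have finP: "finite P" unfolding P_def using hH by simp
  have lt1: "\<And>p q. p \<in> H \<Longrightarrow> q \<in> {L, Suc L} \<Longrightarrow> p < q"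
  proof -
    fix p q assume "p \<in> H" "q \<in> {L, Suc L}"
    then show "p < q" using Hb[of p] L_def n by auto
  qed
  have pP: "paired P" unfolding P_def
    by (rule paired_union[OF hH(1) _ hH(3) paired_pair lt1]) auto
  have Pr: "\<And>q. q \<in> P \<Longrightarrow> 2 \<le> q \<and> q \<le> n"
  proof -
    fix q assume "q \<in> P"
    then have "q \<in> H \<or> q = L \<or> q = Suc L" unfolding P_def by auto
    then show "2 \<le> q \<and> q \<le> n"
    proof (elim disjE)
      assume "q \<in> H" then show ?thesis using Hb[of q] by linarith
    qed (use n k L_def SL in linarith)+
  qed
  have PS: "\<And>p. p \<in> P \<Longrightarrow> 1 < p" using Pr by fastforce
  have cP: "card P = 2*k - 2"
  proof -
    have "card P = card H + card {L, Suc L}" unfolding P_def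
      by (rule card_Un_disjoint) (use hH lt1 in auto)
    then show ?thesis using hH(2) k by simp
  qed
  have oP: "1 \<notin> P" using Pr by fastforce
  have fG: "finite G" unfolding GP using finP by simp
  have cG: "card G + 1 = 2*k" unfolding GP using cP finP oP k by simp
  have Gr: "\<And>z. z \<in> G \<Longrightarrow> 1 \<le> z \<and> z \<le> n" unfolding GP using Pr n by fastforce
  have ex: "\<exists>y>1. y \<notin> G" using Gr n by (intro exI[of _ "Suc n"]) fastforce
  define x0 where "x0 = (LEAST y. 1 < y \<and> y \<notin> G)"
  note R = run_after[OF finP pP PS GP ex x0_def]
  have x0n: "x0 \<le> n"
  proof (rule ccontr)
    assume "\<not> x0 \<le> n"
    then have "{1..n} \<subseteq> G" using R(3) by auto
    then have "card {1..n} \<le> card G" using fG by (intro card_mono) auto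
    then show False using cG n by simp
  qed
  define X0 where "X0 = insert x0 G"
  have fX0: "finite X0" unfolding X0_def using fG by simp
  have cX0: "card X0 = 2*k" unfolding X0_def using fG R(2) cG by simp
  have X0r: "\<And>z. z \<in> X0 \<Longrightarrow> 1 \<le> z \<and> z \<le> n" unfolding X0_def using Gr x0n R(1) by auto
  have nX0: "n \<in> X0" "1 \<in> X0" unfolding X0_def G_def by auto
  have tX0: "2 \<in> X0"
  proof (cases "x0 = 2")
    case True then show ?thesis unfolding X0_def by simp
  next
    case False
    then have "2 < x0" using R(1) by simp
    then show ?thesis using R(3)[of 2] X0_def by simp
  qed
  have X0F: "X0 \<in> Fam k 1 n"
  proof (rule famI[OF fX0 cX0])
    show "0 < k" using k by simp
    show "X0 \<subseteq> {1..n}" using X0r by auto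
    show "paired X0" unfolding X0_def by (rule R(4))
  qed
  have j1: "1 \<le> (1::nat)" "(1::nat) \<le> n div 2 - k + 1" by simp_all
  have X0A: "X0 \<in> B_facets k n (A_anti k n)"
  proof (rule BA_intro[OF k n X0F j1])
    show "\<forall>x\<in>X0. x \<le> n - 1 + 1" using X0r by fastforce
    show "\<exists>x\<in>X0. x \<le> 1" using nX0 by auto
    show "2 \<le> card {x\<in>X0. x \<le> 1 + 1}" using card_ge2[OF fX0, of 1 2] nX0 tX0 by auto
  qed
  have X0S: "X0 \<notin> B_facets k n (shift_down (A_anti k n))"
  proof
    assume "X0 \<in> B_facets k n (shift_down (A_anti k n))"
    then obtain j where j: "2 \<le> j" "\<forall>x\<in>X0. x \<le> n - j"
      using BSh_elim[OF k n] by blast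
    have "n \<le> n - j" using j(2) nX0 by simp
    then show False using j(1) n by linarith
  qed
  have X0BS: "X0 \<in> BS_facets k n (A_anti k n)" by (rule BS_I[OF X0A X0S])
  have GX0: "G \<subseteq> X0" unfolding X0_def by auto
  show ?thesis unfolding G_def[symmetric]
  proof (rule finish[OF k fG cG X0BS GX0])
    fix x assume xG: "x \<notin> G" and xB: "insert x G \<in> BS_facets k n (A_anti k n)"
    have xF: "insert x G \<in> Fam k 1 n" using BS_D(1)[OF xB] .
    have pX: "paired (insert x G)" and rX: "insert x G \<subseteq> {1..n}" using famD[OF xF] by auto
    have "1 < x" using rX xG GP by (cases "x = 1") auto
    then have "x = x0" using R(5) xG pX by blast
    then show "insert x G = X0" using X0_def by simp
  qed
qed


lemma case6:
  assumes k: "k \<ge> 3" and n: "n \<ge> 2*k+1"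
    and H: "H \<in> Fam (k-1) (n div 2 - k + 3) ((n+1) div 2 + k)"
  shows "{n div 2 - k + 2} \<union> H \<in> bdry_facets (BS_facets k n (A_anti k n))"
proof -
  define m where "m = n div 2 - k + 1"
  note nf = n_facts[OF k n]
  have c: "n div 2 - k + 2 = Suc m" "n div 2 - k + 3 = m + 2" using nf(1) m_def by auto
  have U: "(n+1) div 2 + k \<le> n - m + 1" "(n+1) div 2 + k \<le> n" "1 \<le> m"
    using nf m_def k n by linarith+
  have hH: "finite H" "card H = 2*(k-1)" "paired H" using famD[OF H] by auto
  have Hb: "\<And>h. h \<in> H \<Longrightarrow> m + 2 \<le> h \<and> h \<le> n - m + 1 \<and> h \<le> n"
    using famD[OF H] c U by fastforce
  define G where "G = {n div 2 - k + 2} \<union> H"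
  have GH: "G = insert (Suc m) H" unfolding G_def c by simp
  have iH: "Suc m \<notin> H" "m \<notin> H" using Hb by fastforce+
  have fG: "finite G" unfolding GH using hH by simp
  have cG: "card G + 1 = 2*k" unfolding GH using hH iH k by simp
  have mm2: "Suc m \<le> n - m + 1" "Suc m \<le> n" using nf m_def k n by linarith+
  have Gr: "\<And>z. z \<in> G \<Longrightarrow> Suc m \<le> z \<and> z \<le> n - m + 1 \<and> z \<le> n"
  proof -
    fix z assume "z \<in> G"
    then have "z = Suc m \<or> z \<in> H" unfolding GH by auto
    then show "Suc m \<le> z \<and> z \<le> n - m + 1 \<and> z \<le> n"
    proof
      assume "z \<in> H" then show ?thesis using Hb[of z] by linarith
    qed (use mm2 in linarith)
  qed
  define X0 where "X0 = {m, Suc m} \<union> H"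
  have X0G: "X0 = insert m G" unfolding X0_def GH by auto
  have mG: "m \<notin> G" using Gr by fastforce
  have fX0: "finite X0" unfolding X0G using fG by simp
  have cX0: "card X0 = 2*k" unfolding X0G using fG mG cG by simp
  have X0r: "\<And>z. z \<in> X0 \<Longrightarrow> m \<le> z \<and> z \<le> n - m + 1 \<and> z \<le> n"
  proof -
    fix z assume "z \<in> X0"
    then have "z = m \<or> z \<in> G" unfolding X0G by auto
    then show "m \<le> z \<and> z \<le> n - m + 1 \<and> z \<le> n"
    proof
      assume "z \<in> G" then show ?thesis using Gr[of z] by linarith
    qed (use mm2 in linarith)
  qed
  have iX0: "m \<in> X0" "Suc m \<in> X0" unfolding X0_def by auto
  have X0F: "X0 \<in> Fam k 1 n"
  proof (rule famI[OF fX0 cX0])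
    show "0 < k" using k by simp
    show "X0 \<subseteq> {1..n}"
    proof
      fix z assume "z \<in> X0"
      then show "z \<in> {1..n}" using X0r[of z] U by auto
    qed
    have lt: "\<And>p q. p \<in> {m, Suc m} \<Longrightarrow> q \<in> H \<Longrightarrow> p < q"
    proof -
      fix p q assume "p \<in> {m, Suc m}" "q \<in> H"
      then show "p < q" using Hb[of q] by auto
    qed
    show "paired X0" unfolding X0_def
      by (rule paired_union[OF _ hH(1) paired_pair hH(3) lt]) auto
  qed
  have mm: "m \<le> n div 2 - k + 1" using m_def by simp
  have X0A: "X0 \<in> B_facets k n (A_anti k n)"
  proof (rule BA_intro[OF k n X0F U(3) mm])
    show "\<forall>x\<in>X0. x \<le> n - m + 1" using X0r by fastforce
    show "\<exists>x\<in>X0. x \<le> m" using iX0 by auto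
    show "2 \<le> card {x\<in>X0. x \<le> m + 1}" using card_ge2[OF fX0, of m "Suc m"] iX0 by auto
  qed
  have X0S: "X0 \<notin> B_facets k n (shift_down (A_anti k n))"
  proof
    assume "X0 \<in> B_facets k n (shift_down (A_anti k n))"
    then obtain j where j: "2 \<le> j" "j \<le> n div 2 - k + 1" "\<exists>x\<in>X0. x \<le> j - 1"
      using BSh_elim[OF k n] by blast
    have "m \<le> j - 1" using j(3) X0r by force
    then show False using j(1,2) m_def by linarith
  qed
  have X0BS: "X0 \<in> BS_facets k n (A_anti k n)" by (rule BS_I[OF X0A X0S])
  have GX0: "G \<subseteq> X0" unfolding X0G by auto
  show ?thesis unfolding G_def[symmetric]
  proof (rule finish[OF k fG cG X0BS GX0])
    fix x assume xG: "x \<notin> G" and xB: "insert x G \<in> BS_facets k n (A_anti k n)"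
    have xF: "insert x G \<in> Fam k 1 n" using BS_D(1)[OF xB] .
    have pX: "paired (insert x G)" using famD[OF xF] by auto
    show "insert x G = X0"
    proof (cases "Suc m < x")
      case True
      obtain j where j: "j \<le> n div 2 - k + 1" "\<exists>z\<in>insert x G. z \<le> j"
        using BA_elim[OF k n BS_D(2)[OF xB]] by blast
      obtain z where z: "z \<in> insert x G" "z \<le> j" using j(2) by blast
      have "Suc m \<le> z" using z Gr True by auto
      then show ?thesis using z(2) j(1) m_def by linarith
    next
      case False
      then have xi: "x \<le> m" using xG GH by (cases "x = Suc m") auto
      have "Suc x \<in> insert x G"
        by (rule rk0_succ[OF pX]) (use Gr xi in fastforce)+
      then have "Suc x \<in> G" by simp
      then have "x = m" using Gr[of "Suc x"] xi by simp
      then show ?thesis using X0G by simp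
    qed
  qed
qed


theorem mainTheorem3:
  fixes k n :: nat
  assumes "k \<ge> 3" and "n \<ge> 2*k + 1"
  defines "D \<equiv> bdry_facets (BS_facets k n (A_anti k n))"
  shows "(\<forall>i H. 1 \<le> i \<and> i \<le> n div 2 - k + 1 \<and> H \<in> Fam (k-2) (i+2) (n-i)
            \<longrightarrow> {i, i+1} \<union> H \<union> {n-i+1} \<in> D)
       \<and> (\<forall>i H. 1 \<le> i \<and> i \<le> n div 2 - k + 1 \<and> H \<in> Fam (k-2) (i+2) (n-i-2)
            \<longrightarrow> {i, i+1} \<union> H \<union> {n-i-1} \<in> D)
       \<and> (\<forall>i H. 1 \<le> i \<and> i \<le> n div 2 - k + 1 \<and> H \<in> Fam (k-2) (i+2) (n-i-1)
            \<longrightarrow> {i+1} \<union> H \<union> {n-i, n-i+1} \<in> D)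
       \<and> (\<forall>i H. 1 \<le> i \<and> i \<le> n div 2 - k + 1 \<and> H \<in> Fam (k-2) (i+2) (n-i-2)
            \<longrightarrow> {i} \<union> H \<union> {n-i-1, n-i} \<in> D)
       \<and> (\<forall>H. H \<in> Fam (k-2) 2 (n-2) \<longrightarrow> {1} \<union> H \<union> {n-1, n} \<in> D)
       \<and> (\<forall>H. H \<in> Fam (k-1) (n div 2 - k + 3) ((n+1) div 2 + k)
            \<longrightarrow> {n div 2 - k + 2} \<union> H \<in> D)"
  proof -
  note c1 = case1[OF assms(1,2)] and c2 = case2[OF assms(1,2)] and c3 = case3[OF assms(1,2)]
    and c4 = case4[OF assms(1,2)] and c5 = case5[OF assms(1,2)] and c6 = case6[OF assms(1,2)]
  show ?thesis unfolding D_def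
  proof (intro conjI allI impI)
    fix i H assume h: "1 \<le> i \<and> i \<le> n div 2 - k + 1 \<and> H \<in> Fam (k-2) (i+2) (n-i)"
    then show "{i, i+1} \<union> H \<union> {n-i+1} \<in> bdry_facets (BS_facets k n (A_anti k n))"
      using c1 by blast
  next
    fix i H assume h: "1 \<le> i \<and> i \<le> n div 2 - k + 1 \<and> H \<in> Fam (k-2) (i+2) (n-i-2)"
    then show "{i, i+1} \<union> H \<union> {n-i-1} \<in> bdry_facets (BS_facets k n (A_anti k n))"
      using c2 by blast
  next
    fix i H assume h: "1 \<le> i \<and> i \<le> n div 2 - k + 1 \<and> H \<in> Fam (k-2) (i+2) (n-i-1)"
    then show "{i+1} \<union> H \<union> {n-i, n-i+1} \<in> bdry_facets (BS_facets k n (A_anti k n))"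
      using c3 by blast
  next
    fix i H assume h: "1 \<le> i \<and> i \<le> n div 2 - k + 1 \<and> H \<in> Fam (k-2) (i+2) (n-i-2)"
    then show "{i} \<union> H \<union> {n-i-1, n-i} \<in> bdry_facets (BS_facets k n (A_anti k n))"
      using c4 by blast
  next
    fix H assume "H \<in> Fam (k-2) 2 (n-2)"
    then show "{1} \<union> H \<union> {n-1, n} \<in> bdry_facets (BS_facets k n (A_anti k n))"
      using c5 by blast
  next
    fix H assume "H \<in> Fam (k-1) (n div 2 - k + 3) ((n+1) div 2 + k)"
    then show "{n div 2 - k + 2} \<union> H \<in> bdry_facets (BS_facets k n (A_anti k n))"
      using c6 by blast
  qed
qed

end
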